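(* Let $d\ge2$ be an integer and $p$ a prime with $p\equiv 3\pmod 4$. Let $\alpha_n=\frac{(1/2)_n}{n!}$, where $(x)_n=x(x+1)\cdots(x+n-1)$, let $F_p(z)=\sum_{n=0}^{p-1}\alpha_n^d z^n$ and $\epsilon_p=(-1)^{d(p-1)/2}$. Then $$F_p(-\epsilon_p)\equiv 0\pmod{p}.$$
   Context: Congruences are in the ring $\mathbb{Z}_{(p)}$ of $p$-integral rationals. *)

theory Defs
  imports Complex_Main "HOL-Computational_Algebra.Primes"
begin

text \<open>Congruence in the ring Z_(p) of p-integral rationals:
  x = y (mod p) iff x - y = p * (a / b) with integers a, b and p not dividing b.\<close>
definition cong_Zp :: "rat \<Rightarrow> rat \<Rightarrow> nat \<Rightarrow> bool" where
  "cong_Zp x y p \<longleftrightarrow>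
     (\<exists>a b :: int. \<not> int p dvd b \<and> x - y = of_nat p * (of_int a / of_int b))"

definition alpha :: "nat \<Rightarrow> rat" where
  "alpha n = pochhammer (1/2) n / fact n"

definition F :: "nat \<Rightarrow> nat \<Rightarrow> rat \<Rightarrow> rat" where
  "F d p z = (\<Sum>n = 0..p-1. alpha n ^ d * z ^ n)"

definition eps :: "nat \<Rightarrow> nat \<Rightarrow> rat" where
  "eps d p = (-1) ^ (d * (p - 1) div 2)"

end

theory Submission
  imports Defs "HOL-Number_Theory.Number_Theory"
begin

lemma cbin_step: "Suc n * (2*Suc n choose Suc n) = 2*(2*n+1) * (2*n choose n)"
  by (metis Suc_eq_plus1 Suc_times_binomial Suc_times_binomial_add
    add_2_eq_Suc add_mult_distrib mult_Suc_right nat_mult_1 one_add_one)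

lemma bin_step: "Suc n * (m choose Suc n) = (m - n) * (m choose n)"
  by (metis binomial_absorption binomial_absorb_comp)

lemma key:
  assumes "prime p" "p = 2*m+1"
  shows "n < p \<Longrightarrow> [int (2*n choose n) = (-4)^n * int (m choose n)] (mod int p)"
proof (induction n)
  case 0
  then show ?case by simp
next
  case (Suc n)
  have IH: "[int (2*n choose n) = (-4)^n * int (m choose n)] (mod int p)"
    using Suc by simp
  have e1: "int (Suc n) * int (2*Suc n choose Suc n) = 2*(2*int n+1) * int (2*n choose n)"
  proof -
    have "int (Suc n * (2*Suc n choose Suc n)) = int (2*(2*n+1) * (2*n choose n))"
      by (rule arg_cong[OF cbin_step])
    then show ?thesis by (simp only: of_nat_mult of_nat_add of_nat_numeral of_nat_1)
  qed
  have e2: "int (Suc n) * int (m choose Suc n) = int (m - n) * int (m choose n)"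
  proof -
    have "int (Suc n * (m choose Suc n)) = int ((m - n) * (m choose n))"
      by (rule arg_cong[OF bin_step])
    then show ?thesis by (simp only: of_nat_mult)
  qed
  have e3: "[2*(2*int n+1) * int (m choose n) = -4 * int (m - n) * int (m choose n)] (mod int p)"
  proof (cases "n \<le> m")
    case True
    have "2*(2*int n+1) * int (m choose n) = -4 * int (m - n) * int (m choose n) + int p * (2 * int (m choose n))"
      using True assms(2) by (simp add: algebra_simps of_nat_diff)
    then have "2*(2*int n+1) * int (m choose n) - (-4 * int (m - n) * int (m choose n)) = int p * (2 * int (m choose n))"
      by simp
    then show ?thesis
      unfolding cong_iff_dvd_diff by simp
  next
    case False
    then show ?thesis by (simp add: binomial_eq_0)
  qed
  have "[int (Suc n) * int (2*Suc n choose Suc n) = int (Suc n) * ((-4)^Suc n * int (m choose Suc n))] (mod int p)"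
  proof -
    have A: "[int (Suc n) * int (2*Suc n choose Suc n) = 2*(2*int n+1) * ((-4)^n * int (m choose n))] (mod int p)"
      unfolding e1 by (intro cong_mult cong_refl IH)
    have eq1: "2*(2*int n+1) * ((-4)^n * int (m choose n)) = (-4)^n * (2*(2*int n+1) * int (m choose n))"
      by (simp add: algebra_simps)
    have B: "[(-4)^n * (2*(2*int n+1) * int (m choose n)) = (-4)^n * (-4 * int (m - n) * int (m choose n))] (mod int p)"
      by (intro cong_mult cong_refl e3)
    have eq2: "(-4)^n * (-4 * int (m - n) * int (m choose n)) = int (Suc n) * ((-4)^Suc n * int (m choose Suc n))"
    proof -
      have "int (Suc n) * ((-4)^Suc n * int (m choose Suc n)) = (-4)^Suc n * (int (Suc n) * int (m choose Suc n))"
        by (simp only: mult_ac)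
      also have "\<dots> = (-4)^Suc n * (int (m - n) * int (m choose n))"
        by (simp only: e2)
      also have "\<dots> = (-4)^n * (-4 * int (m - n) * int (m choose n))"
        by (simp only: power_Suc mult_ac)
      finally show ?thesis by simp
    qed
    show ?thesis using cong_trans[OF A[unfolded eq1] B[unfolded eq2]] .
  qed
  moreover have "coprime (int (Suc n)) (int p)"
  proof -
    have "\<not> p dvd Suc n" using Suc.prems by (auto dest: dvd_imp_le)
    then have "coprime p (Suc n)" using assms(1) prime_imp_coprime by blast
    then show ?thesis by (metis coprime_commute coprime_int_iff)
  qed
  ultimately show ?case using cong_mult_lcancel by blast
qed

lemma cancel_aux: "k \<noteq> 0 \<Longrightarrow> of_nat (k * X) / (y * of_nat k) = (of_nat X / y :: rat)"
  by simp

lemma alpha_eq: "alpha n = of_nat (2*n choose n) / 4^n"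
proof (induction n)
  case 0
  then show ?case by (simp add: alpha_def)
next
  case (Suc n)
  have "alpha (Suc n) = alpha n * ((1/2 + of_nat n) / of_nat (Suc n))"
    unfolding alpha_def by (simp add: pochhammer_Suc fact_Suc field_simps)
  also have "\<dots> = of_nat (2*n choose n) / 4^n * ((1/2 + of_nat n) / of_nat (Suc n))"
    using Suc by simp
  also have "\<dots> = of_nat (Suc n * (2*Suc n choose Suc n)) / (4^Suc n * of_nat (Suc n))"
  proof -
    have h: "(1/2 + of_nat n :: rat) = of_nat (2*(2*n+1)) / 4" by simp
    show ?thesis unfolding h cbin_step of_nat_mult[of "2*(2*n+1)"]
      by (simp only: power_Suc times_divide_eq_left times_divide_eq_right divide_divide_eq_left mult_ac)
  qed
  also have "\<dots> = of_nat (2*Suc n choose Suc n) / 4^Suc n"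
    by (rule cancel_aux) simp
  finally show ?case .
qed


lemma alt_sum_zero:
  assumes "odd m" "d \<ge> 1"
  shows "(\<Sum>n=0..2*m. (-1)^n * int (m choose n) ^ d) = (0::int)"
proof -
  define g where "g n = (-1)^n * int (m choose n) ^ d" for n
  have "(\<Sum>n=0..2*m. g n) = (\<Sum>n=0..m. g n)"
    by (rule sum.mono_neutral_right) (use assms in \<open>auto simp: g_def binomial_eq_0\<close>)
  moreover have "(\<Sum>n=0..m. g n) = (\<Sum>n=0..m. g (m + 0 - n))"
    by (rule sum.atLeastAtMost_rev)
  moreover have "(\<Sum>n=0..m. g (m + 0 - n)) = (\<Sum>n=0..m. - g n)"
  proof (rule sum.cong[OF refl])
    fix n assume "n \<in> {0..m}"
    then have nm: "n \<le> m" by simp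
    have "(-1::int)^(m-n) * (-1)^n = (-1)^m" using nm by (simp add: power_add[symmetric])
    then have "(-1::int)^(m-n) = - ((-1)^n)" using assms(1)
      by (cases "even n") auto
    moreover have "m choose (m - n) = m choose n" using nm binomial_symmetric by metis
    ultimately show "g (m + 0 - n) = - g n" by (simp add: g_def)
  qed
  ultimately have "(\<Sum>n=0..2*m. g n) = - (\<Sum>n=0..2*m. g n)"
    by (simp add: sum_negf)
  then show ?thesis unfolding g_def by simp
qed

lemma term_eq:
  fixes b :: int
  shows "((-4)^n * b)^d * 4^((2*m-n)*d) * (- ((-1)^d))^n = 4^(n*d) * 4^((2*m-n)*d) * ((-1)^n * b^d)"
proof -
  have s: "((-1::int)^(n*d)) * (-1)^(n*d) = 1"
    by (simp add: power_add[symmetric])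
  have f1: "((-4::int)^n * b)^d = (-1)^(n*d) * 4^(n*d) * b^d"
    by (simp only: power_mult_distrib power_minus[of "4::int" n] power_mult)
  have f2: "(- ((-1::int)^d))^n = (-1)^n * (-1)^(n*d)"
    by (simp only: power_minus[of "(-1::int)^d" n] mult.commute[of n d] power_mult)
  have "((-4)^n * b)^d * 4^((2*m-n)*d) * (- ((-1)^d))^n
      = ((-1)^(n*d) * 4^(n*d) * b^d) * 4^((2*m-n)*d) * ((-1)^n * (-1)^(n*d))"
    by (simp only: f1 f2)
  also have "\<dots> = ((-1)^(n*d) * (-1)^(n*d)) * (4^(n*d) * 4^((2*m-n)*d) * ((-1)^n * b^d))"
    by (simp only: mult_ac)
  also have "\<dots> = 4^(n*d) * 4^((2*m-n)*d) * ((-1)^n * b^d)"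
    by (simp only: s mult_1_left)
  finally show ?thesis .
qed

theorem corollary2p4:
  fixes d p :: nat
  assumes "d \<ge> 2" and "prime p" and "p mod 4 = 3"
  shows "cong_Zp (F d p (- eps d p)) 0 p"
proof -
  define m where "m = p div 2"
  have pm: "p = 2*m+1" and modd: "odd m" using assms(3) unfolding m_def by presburger+
  define z :: int where "z = - ((-1)^d)"
  have dm0: "(-1::int)^(d*m) = ((-1)^m)^d" by (metis mult.commute power_mult)
  have dm: "(-1::int)^(d*m) = (-1)^d"
    unfolding dm0 using modd by simp
  have epsz: "- eps d p = of_int z"
  proof -
    have "d * (p - 1) div 2 = d * m" using pm by simp
    then have "eps d p = (-1)^(d*m)" unfolding eps_def by simp
    also have "\<dots> = of_int ((-1)^(d*m))" by simp
    finally show ?thesis unfolding z_def using dm by simp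
  qed
  define N where "N = (\<Sum>n=0..2*m. int (2*n choose n) ^ d * 4^((2*m-n)*d) * z^n)"
  have FN: "F d p (of_int z) = of_int N / 4^(2*m*d)"
  proof -
    have "F d p (of_int z) = (\<Sum>n=0..2*m. alpha n ^ d * of_int z ^ n)"
      unfolding F_def using pm by simp
    also have "\<dots> = (\<Sum>n=0..2*m. of_int (int (2*n choose n) ^ d * 4^((2*m-n)*d) * z^n) / 4^(2*m*d))"
    proof (rule sum.cong[OF refl])
      fix n assume "n \<in> {0..2*m}"
      then have "n*d + (2*m-n)*d = 2*m*d"
        by (simp add: add_mult_distrib[symmetric])
      then have e: "(4::rat)^(2*m*d) = 4^(n*d) * 4^((2*m-n)*d)"
        by (metis power_add)
      show "alpha n ^ d * of_int z ^ n = of_int (int (2*n choose n) ^ d * 4^((2*m-n)*d) * z^n) / 4^(2*m*d)"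
        unfolding alpha_eq e by (simp add: power_divide power_mult[symmetric] mult.commute)
    qed
    also have "\<dots> = of_int N / 4^(2*m*d)"
      unfolding N_def by (simp add: sum_divide_distrib)
    finally show ?thesis .
  qed
  have cN: "[N = (\<Sum>n=0..2*m. 4^(2*m*d) * ((-1)^n * int (m choose n) ^ d))] (mod int p)"
    unfolding N_def
  proof (rule cong_sum)
    fix n assume "n \<in> {0..2*m}"
    then have nle: "n \<le> 2*m" by simp
    then have "n*d + (2*m-n)*d = 2*m*d"
      by (simp add: add_mult_distrib[symmetric])
    then have e: "(4::int)^(2*m*d) = 4^(n*d) * 4^((2*m-n)*d)"
      by (metis power_add)
    have k: "[int (2*n choose n) = (-4)^n * int (m choose n)] (mod int p)"
      using key[OF assms(2) pm] nle pm by simp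
    have "[int (2*n choose n) ^ d * 4^((2*m-n)*d) * z^n = ((-4)^n * int (m choose n)) ^ d * 4^((2*m-n)*d) * z^n] (mod int p)"
      by (intro cong_mult cong_pow cong_refl k)
    then show "[int (2*n choose n) ^ d * 4^((2*m-n)*d) * z^n = 4^(2*m*d) * ((-1)^n * int (m choose n) ^ d)] (mod int p)"
      unfolding z_def e term_eq .
  qed
  have "(\<Sum>n=0..2*m. 4^(2*m*d) * ((-1)^n * int (m choose n) ^ d)) = (0::int)"
    using alt_sum_zero[OF modd] assms(1) by (simp add: sum_distrib_left[symmetric])
  with cN have dvdN: "int p dvd N" by (simp add: cong_0_iff)
  have nd: "\<not> int p dvd 4^(2*m*d)"
  proof
    assume "int p dvd 4^(2*m*d)"
    then have "p dvd 4^(2*m*d)" by (metis of_nat_dvd_iff of_nat_numeral of_nat_power)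
    then have "p dvd 4" using assms(2) prime_dvd_power by blast
    then have "p \<le> 4" by (auto dest: dvd_imp_le)
    then have "p = 3" using assms(3) by presburger
    with \<open>p dvd 4\<close> show False by simp
  qed
  show ?thesis
    unfolding cong_Zp_def epsz
  proof (intro exI conjI)
    show "\<not> int p dvd 4^(2*m*d)" by (rule nd)
    have Neq: "N = int p * (N div int p)" using dvdN by simp
    then show "F d p (of_int z) - 0 = of_nat p * (of_int (N div int p) / of_int (4^(2*m*d)))"
    proof -
      have "(of_int N :: rat) = of_int (int p * (N div int p))" using Neq by (rule arg_cong)
      then have "(of_int N :: rat) = of_nat p * of_int (N div int p)" by (simp only: of_int_mult of_int_of_nat_eq)
      then show ?thesis unfolding FN by (simp only: diff_zero of_int_power of_int_numeral times_divide_eq_right)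
    qed
  qed
qed

end
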